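(* Let $h\in\mathcal{C}^\infty(\mathbb{R},\mathbb{R})$ and $\alpha\in\mathbb{R}$. Let $\phi,F\in\mathcal{C}^\infty(\mathbb{R}^3,\mathbb{R})$ be functions of $(t,x,y)$, and set $\psi=(\psi_1,\psi_2)=0$. Assume that \[ \cos\alpha\,\frac{\partial\phi}{\partial t}+\cos\alpha\,\frac{\partial\phi}{\partial x}+\sin\alpha\,\frac{\partial\phi}{\partial y}=\sin\alpha\,F,\qquad \sin\alpha\,\frac{\partial\phi}{\partial t}-\sin\alpha\,\frac{\partial\phi}{\partial x}+\cos\alpha\,\frac{\partial\phi}{\partial y}=-\cos\alpha\,F, \] and $F+h'(\phi)=0$ (these are the component form of the conditions $(\cos\alpha\,\tau_1+\sin\alpha\,\tau_2)\Phi=0$, $\psi=0$, $F+h'(\phi)=0$ for the superfield $\Phi=\phi+\theta^1\psi_1+\theta^2\psi_2+\theta^1\theta^2F$ on $\mathbb{R}^{3|2}$). Then $(\phi,\psi,F)$ solves the Euler--Lagrange system \[ \square\phi+h''(\phi)h'(\phi)+h'''(\phi)\psi_1\psi_2=0,\qquad \mathcal{D}\psi-h''(\phi)\psi=0,\qquad F+h'(\phi)=0; \] in particular $\square\phi+h''(\phi)h'(\phi)=0$.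
   Context: $\square:=\frac{\partial^2}{\partial t^2}-\frac{\partial^2}{\partial x^2}-\frac{\partial^2}{\partial y^2}$. On $\mathbb{R}^{3|2}$ with even coordinates $t,x,y$ and odd coordinates $\theta^1,\theta^2$, $\tau_1=\partial_{\theta^1}+\theta^1(\partial_t+\partial_x)+\theta^2\partial_y$ and $\tau_2=\partial_{\theta^2}+\theta^1\partial_y+\theta^2(\partial_t-\partial_x)$. With $\partial_{11}=\partial_t+\partial_x$, $\partial_{22}=\partial_t-\partial_x$, $\partial_{12}=\partial_{21}=\partial_y$, the operator $\mathcal{D}$ acts on pairs $\psi=(\psi_1,\psi_2)$ by $(\mathcal{D}\psi)_1=\partial_{12}\psi_1-\partial_{11}\psi_2$, $(\mathcal{D}\psi)_2=\partial_{22}\psi_1-\partial_{12}\psi_2$. The Euler--Lagrange system above is that of the action $\int d^3x\,d^2\theta\,(\tfrac14\epsilon^{ab}D_a\Phi D_b\Phi+\Phi^*h)$. *)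

theory Defs
  imports "HOL-Analysis.Analysis"
begin

definition pd_t :: "(real \<Rightarrow> real \<Rightarrow> real \<Rightarrow> real) \<Rightarrow> real \<Rightarrow> real \<Rightarrow> real \<Rightarrow> real" where
  "pd_t f = (\<lambda>t x y. deriv (\<lambda>s. f s x y) t)"

definition pd_x :: "(real \<Rightarrow> real \<Rightarrow> real \<Rightarrow> real) \<Rightarrow> real \<Rightarrow> real \<Rightarrow> real \<Rightarrow> real" where
  "pd_x f = (\<lambda>t x y. deriv (\<lambda>s. f t s y) x)"

definition pd_y :: "(real \<Rightarrow> real \<Rightarrow> real \<Rightarrow> real) \<Rightarrow> real \<Rightarrow> real \<Rightarrow> real \<Rightarrow> real" where
  "pd_y f = (\<lambda>t x y. deriv (\<lambda>s. f t x s) y)"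

coinductive smooth1 :: "(real \<Rightarrow> real) \<Rightarrow> bool" where
  "(\<forall>z. h differentiable at z) \<Longrightarrow> smooth1 (deriv h) \<Longrightarrow> smooth1 h"

coinductive smooth3 :: "(real \<Rightarrow> real \<Rightarrow> real \<Rightarrow> real) \<Rightarrow> bool" where
  "(\<forall>t x y. (\<lambda>(a, b, c). f a b c) differentiable at (t, x, y))
   \<Longrightarrow> smooth3 (pd_t f) \<Longrightarrow> smooth3 (pd_x f) \<Longrightarrow> smooth3 (pd_y f) \<Longrightarrow> smooth3 f"

definition wave_box :: "(real \<Rightarrow> real \<Rightarrow> real \<Rightarrow> real) \<Rightarrow> real \<Rightarrow> real \<Rightarrow> real \<Rightarrow> real" where
  "wave_box f = (\<lambda>t x y. pd_t (pd_t f) t x y - pd_x (pd_x f) t x y - pd_y (pd_y f) t x y)"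

text \<open>The operator D on pairs (psi1, psi2), with d11 = d_t + d_x, d22 = d_t - d_x,
  d12 = d21 = d_y.\<close>
definition Dop1 :: "(real \<Rightarrow> real \<Rightarrow> real \<Rightarrow> real) \<Rightarrow> (real \<Rightarrow> real \<Rightarrow> real \<Rightarrow> real) \<Rightarrow> real \<Rightarrow> real \<Rightarrow> real \<Rightarrow> real" where
  "Dop1 \<psi>1 \<psi>2 = (\<lambda>t x y. pd_y \<psi>1 t x y - (pd_t \<psi>2 t x y + pd_x \<psi>2 t x y))"

definition Dop2 :: "(real \<Rightarrow> real \<Rightarrow> real \<Rightarrow> real) \<Rightarrow> (real \<Rightarrow> real \<Rightarrow> real \<Rightarrow> real) \<Rightarrow> real \<Rightarrow> real \<Rightarrow> real \<Rightarrow> real" where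
  "Dop2 \<psi>1 \<psi>2 = (\<lambda>t x y. (pd_t \<psi>1 t x y - pd_x \<psi>1 t x y) - pd_y \<psi>2 t x y)"

definition EL_system :: "(real \<Rightarrow> real) \<Rightarrow> (real \<Rightarrow> real \<Rightarrow> real \<Rightarrow> real) \<Rightarrow>
    (real \<Rightarrow> real \<Rightarrow> real \<Rightarrow> real) \<Rightarrow> (real \<Rightarrow> real \<Rightarrow> real \<Rightarrow> real) \<Rightarrow>
    (real \<Rightarrow> real \<Rightarrow> real \<Rightarrow> real) \<Rightarrow> bool" where
  "EL_system h \<phi> \<psi>1 \<psi>2 F \<longleftrightarrow>
     (\<forall>t x y. wave_box \<phi> t x y + deriv (deriv h) (\<phi> t x y) * deriv h (\<phi> t x y)
        + deriv (deriv (deriv h)) (\<phi> t x y) * \<psi>1 t x y * \<psi>2 t x y = 0) \<and>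
     (\<forall>t x y. Dop1 \<psi>1 \<psi>2 t x y - deriv (deriv h) (\<phi> t x y) * \<psi>1 t x y = 0) \<and>
     (\<forall>t x y. Dop2 \<psi>1 \<psi>2 t x y - deriv (deriv h) (\<phi> t x y) * \<psi>2 t x y = 0) \<and>
     (\<forall>t x y. F t x y + deriv h (\<phi> t x y) = 0)"

end

theory Submission
  imports Defs
begin

lemma clairaut:
  fixes g g1 g2 g12 g21 :: "real \<Rightarrow> real \<Rightarrow> real"
  assumes d1: "\<And>u v. ((\<lambda>u. g u v) has_real_derivative g1 u v) (at u)"
    and d2: "\<And>u v. ((\<lambda>v. g u v) has_real_derivative g2 u v) (at v)"
    and d12: "\<And>u v. ((\<lambda>v. g1 u v) has_real_derivative g12 u v) (at v)"
    and d21: "\<And>u v. ((\<lambda>u. g2 u v) has_real_derivative g21 u v) (at u)"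
    and c12: "isCont (\<lambda>p. g12 (fst p) (snd p)) (a, b)"
    and c21: "isCont (\<lambda>p. g21 (fst p) (snd p)) (a, b)"
  shows "g12 a b = g21 a b"
proof -
  have key: "\<exists>p q. a < fst p \<and> fst p < a + e \<and> b < snd p \<and> snd p < b + e
     \<and> a < fst q \<and> fst q < a + e \<and> b < snd q \<and> snd q < b + e
     \<and> g12 (fst p) (snd p) = g21 (fst q) (snd q)" if e: "e > 0" for e
  proof -
    define D where "D = g (a+e) (b+e) - g (a+e) b - g a (b+e) + g a b"
    obtain \<xi> where \<xi>: "a < \<xi>" "\<xi> < a + e"
      "(g (a+e) (b+e) - g (a+e) b) - (g a (b+e) - g a b) = (a + e - a) * (g1 \<xi> (b+e) - g1 \<xi> b)"
      using MVT2[of a "a+e" "\<lambda>u. g u (b+e) - g u b" "\<lambda>u. g1 u (b+e) - g1 u b",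
         OF _ DERIV_diff[OF d1 d1]] e by auto
    obtain \<eta> where \<eta>: "b < \<eta>" "\<eta> < b + e" "g1 \<xi> (b+e) - g1 \<xi> b = (b + e - b) * g12 \<xi> \<eta>"
      using MVT2[of b "b+e" "\<lambda>v. g1 \<xi> v" "\<lambda>v. g12 \<xi> v"] e d12 by auto
    obtain \<eta>' where \<eta>': "b < \<eta>'" "\<eta>' < b + e"
      "(g (a+e) (b+e) - g a (b+e)) - (g (a+e) b - g a b) = (b + e - b) * (g2 (a+e) \<eta>' - g2 a \<eta>')"
      using MVT2[of b "b+e" "\<lambda>v. g (a+e) v - g a v" "\<lambda>v. g2 (a+e) v - g2 a v",
         OF _ DERIV_diff[OF d2 d2]] e by auto
    obtain \<xi>' where \<xi>': "a < \<xi>'" "\<xi>' < a + e" "g2 (a+e) \<eta>' - g2 a \<eta>' = (a + e - a) * g21 \<xi>' \<eta>'"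
      using MVT2[of a "a+e" "\<lambda>u. g2 u \<eta>'" "\<lambda>u. g21 u \<eta>'"] e d21 by auto
    have "e * (e * g12 \<xi> \<eta>) = e * (e * g21 \<xi>' \<eta>')"
      using \<xi>(3) \<eta>(3) \<eta>'(3) \<xi>'(3) by (simp add: algebra_simps)
    hence "g12 \<xi> \<eta> = g21 \<xi>' \<eta>'" using e by simp
    thus ?thesis using \<xi> \<eta> \<eta>' \<xi>'
      by (intro exI[of _ "(\<xi>, \<eta>)"] exI[of _ "(\<xi>', \<eta>')"]) auto
  qed
  define e :: "nat \<Rightarrow> real" where "e n = 1 / (real n + 1)" for n
  have epos: "e n > 0" for n by (simp add: e_def)
  have e0: "e \<longlonglongrightarrow> 0" unfolding e_def using LIMSEQ_inverse_real_of_nat by (simp add: inverse_eq_divide add.commute)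
  from key[OF epos] have "\<forall>n. \<exists>p q. a < fst p \<and> fst p < a + e n \<and> b < snd p \<and> snd p < b + e n
     \<and> a < fst q \<and> fst q < a + e n \<and> b < snd q \<and> snd q < b + e n
     \<and> g12 (fst p) (snd p) = g21 (fst q) (snd q)" by blast
  then obtain P Q where PQ: "\<And>n. a < fst (P n) \<and> fst (P n) < a + e n \<and> b < snd (P n) \<and> snd (P n) < b + e n
     \<and> a < fst (Q n) \<and> fst (Q n) < a + e n \<and> b < snd (Q n) \<and> snd (Q n) < b + e n
     \<and> g12 (fst (P n)) (snd (P n)) = g21 (fst (Q n)) (snd (Q n))" by metis
  have ae: "(\<lambda>n. a + e n) \<longlonglongrightarrow> a" "(\<lambda>n. b + e n) \<longlonglongrightarrow> b"
    using tendsto_add[OF tendsto_const e0] by auto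
  have lim: "(\<lambda>n. c n) \<longlonglongrightarrow> z" if "\<And>n. z < c n \<and> c n < z + e n" for c z
  proof (rule tendsto_sandwich[of "\<lambda>n. z" _ _ "\<lambda>n. z + e n"])
    show "\<forall>\<^sub>F n in sequentially. z \<le> c n" using that by (simp add: less_imp_le)
    show "\<forall>\<^sub>F n in sequentially. c n \<le> z + e n" using that by (simp add: less_imp_le)
    show "(\<lambda>n. z + e n) \<longlonglongrightarrow> z" using tendsto_add[OF tendsto_const e0] by auto
  qed auto
  have "P \<longlonglongrightarrow> (a, b)"
  proof -
    have "(\<lambda>n. (fst (P n), snd (P n))) \<longlonglongrightarrow> (a, b)"
      by (intro tendsto_Pair lim) (use PQ in auto)
    thus ?thesis by simp
  qed
  hence L1: "(\<lambda>n. g12 (fst (P n)) (snd (P n))) \<longlonglongrightarrow> g12 a b"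
    using isCont_tendsto_compose[OF c12] by fastforce
  have "Q \<longlonglongrightarrow> (a, b)"
  proof -
    have "(\<lambda>n. (fst (Q n), snd (Q n))) \<longlonglongrightarrow> (a, b)"
      by (intro tendsto_Pair lim) (use PQ in auto)
    thus ?thesis by simp
  qed
  hence L2: "(\<lambda>n. g21 (fst (Q n)) (snd (Q n))) \<longlonglongrightarrow> g21 a b"
    using isCont_tendsto_compose[OF c21] by fastforce
  have "(\<lambda>n. g12 (fst (P n)) (snd (P n))) = (\<lambda>n. g21 (fst (Q n)) (snd (Q n)))"
    using PQ by auto
  with L1 L2 show ?thesis using LIMSEQ_unique by metis
qed

lemma smooth3_D:
  assumes "smooth3 f"
  shows "(\<lambda>(a, b, c). f a b c) differentiable at (t, x, y)" "smooth3 (pd_t f)" "smooth3 (pd_x f)" "smooth3 (pd_y f)"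
  using assms by (auto elim: smooth3.cases)

lemma pdt_has:
  assumes "smooth3 f" shows "((\<lambda>s. f s x y) has_real_derivative pd_t f t x y) (at t)"
proof -
  have "((\<lambda>(a, b, c). f a b c) \<circ> (\<lambda>s. (s, x, y))) differentiable at t"
    by (rule differentiable_chain_at) (auto intro!: derivative_intros smooth3_D[OF assms])
  hence "(\<lambda>s. f s x y) differentiable at t" by (simp add: o_def)
  thus ?thesis unfolding pd_t_def by (simp add: DERIV_deriv_iff_real_differentiable)
qed

lemma pdx_has:
  assumes "smooth3 f" shows "((\<lambda>s. f t s y) has_real_derivative pd_x f t x y) (at x)"
proof -
  have "((\<lambda>(a, b, c). f a b c) \<circ> (\<lambda>s. (t, s, y))) differentiable at x"
    by (rule differentiable_chain_at) (auto intro!: derivative_intros smooth3_D[OF assms])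
  hence "(\<lambda>s. f t s y) differentiable at x" by (simp add: o_def)
  thus ?thesis unfolding pd_x_def by (simp add: DERIV_deriv_iff_real_differentiable)
qed

lemma pdy_has:
  assumes "smooth3 f" shows "((\<lambda>s. f t x s) has_real_derivative pd_y f t x y) (at y)"
proof -
  have "((\<lambda>(a, b, c). f a b c) \<circ> (\<lambda>s. (t, x, s))) differentiable at y"
    by (rule differentiable_chain_at) (auto intro!: derivative_intros smooth3_D[OF assms])
  hence "(\<lambda>s. f t x s) differentiable at y" by (simp add: o_def)
  thus ?thesis unfolding pd_y_def by (simp add: DERIV_deriv_iff_real_differentiable)
qed

lemma cont3:
  assumes "smooth3 f"
  shows "isCont (\<lambda>p. f (fst p) (snd p) y) (t, x)"
    "isCont (\<lambda>p. f (fst p) x (snd p)) (t, y)"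
    "isCont (\<lambda>p. f t (fst p) (snd p)) (x, y)"
proof -
  have c: "isCont (\<lambda>(a, b, c). f a b c) (t', x', y')" for t' x' y'
    using differentiable_imp_continuous_within[OF smooth3_D(1)[OF assms]] by blast
  have "isCont ((\<lambda>(a, b, c). f a b c) \<circ> (\<lambda>p. (fst p, snd p, y))) (t, x)"
    by (rule continuous_at_compose) (auto intro!: continuous_intros c[of t x y, simplified])
  thus "isCont (\<lambda>p. f (fst p) (snd p) y) (t, x)" by (simp add: o_def)
  have "isCont ((\<lambda>(a, b, c). f a b c) \<circ> (\<lambda>p. (fst p, x, snd p))) (t, y)"
    by (rule continuous_at_compose) (auto intro!: continuous_intros c[of t x y, simplified])
  thus "isCont (\<lambda>p. f (fst p) x (snd p)) (t, y)" by (simp add: o_def)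
  have "isCont ((\<lambda>(a, b, c). f a b c) \<circ> (\<lambda>p. (t, fst p, snd p))) (x, y)"
    by (rule continuous_at_compose) (auto intro!: continuous_intros c[of t x y, simplified])
  thus "isCont (\<lambda>p. f t (fst p) (snd p)) (x, y)" by (simp add: o_def split_def)
qed

lemma sym_tx:
  assumes "smooth3 f" shows "pd_x (pd_t f) t x y = pd_t (pd_x f) t x y"
  using smooth3_D[OF assms] smooth3_D[OF smooth3_D(2)[OF assms]] smooth3_D[OF smooth3_D(3)[OF assms]]
  by (intro clairaut[of "\<lambda>u v. f u v y" "\<lambda>u v. pd_t f u v y" "\<lambda>u v. pd_x f u v y"
     "\<lambda>u v. pd_x (pd_t f) u v y" "\<lambda>u v. pd_t (pd_x f) u v y" t x])
   (auto intro: pdt_has pdx_has cont3 assms)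

lemma sym_ty:
  assumes "smooth3 f" shows "pd_y (pd_t f) t x y = pd_t (pd_y f) t x y"
  using smooth3_D[OF assms] smooth3_D[OF smooth3_D(2)[OF assms]] smooth3_D[OF smooth3_D(4)[OF assms]]
  by (intro clairaut[of "\<lambda>u v. f u x v" "\<lambda>u v. pd_t f u x v" "\<lambda>u v. pd_y f u x v"
     "\<lambda>u v. pd_y (pd_t f) u x v" "\<lambda>u v. pd_t (pd_y f) u x v" t y])
   (auto intro: pdt_has pdy_has cont3 assms)

lemma sym_xy:
  assumes "smooth3 f" shows "pd_y (pd_x f) t x y = pd_x (pd_y f) t x y"
  using smooth3_D[OF assms] smooth3_D[OF smooth3_D(3)[OF assms]] smooth3_D[OF smooth3_D(4)[OF assms]]
  by (intro clairaut[of "\<lambda>u v. f t u v" "\<lambda>u v. pd_x f t u v" "\<lambda>u v. pd_y f t u v"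
     "\<lambda>u v. pd_y (pd_x f) t u v" "\<lambda>u v. pd_x (pd_y f) t u v" x y])
   (auto intro: pdx_has pdy_has cont3 assms)

lemma lin_deriv:
  fixes P Q R G :: "real \<Rightarrow> real"
  assumes "\<And>s. a*P s + b*Q s + c*R s = d*G s"
    and "(P has_real_derivative P') (at t)" "(Q has_real_derivative Q') (at t)"
    "(R has_real_derivative R') (at t)" "(G has_real_derivative G') (at t)"
  shows "a*P' + b*Q' + c*R' = d*G'"
proof -
  have 1: "((\<lambda>s. a*P s + b*Q s + c*R s) has_real_derivative a*P' + b*Q' + c*R') (at t)"
    using assms(2-4) by (intro DERIV_add DERIV_cmult)
  have e: "(\<lambda>s. a*P s + b*Q s + c*R s) = (\<lambda>s. d*G s)" using assms(1) by auto
  moreover have "((\<lambda>s. d*G s) has_real_derivative d*G') (at t)"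
    using assms(5) by (rule DERIV_cmult)
  ultimately have "((\<lambda>s. a*P s + b*Q s + c*R s) has_real_derivative d*G') (at t)" by simp
  with 1 show ?thesis by (rule DERIV_unique)
qed

lemma chain_F:
  fixes G p hd :: "real \<Rightarrow> real"
  assumes "\<And>s. G s = - hd (p s)" "(hd has_real_derivative k) (at (p t))"
    "(p has_real_derivative p') (at t)" "(G has_real_derivative G') (at t)"
  shows "G' = - k * p'"
proof -
  have "((\<lambda>s. - hd (p s)) has_real_derivative - (k * p')) (at t)"
    by (intro DERIV_minus DERIV_chain2[OF assms(2) assms(3)])
  hence "(G has_real_derivative - (k * p')) (at t)" proof -
    have "G = (\<lambda>s. - hd (p s))" using assms(1) by auto
    thus ?thesis using \<open>((\<lambda>s. - hd (p s)) has_real_derivative - (k * p')) (at t)\<close> by simp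
  qed
  thus ?thesis using DERIV_unique assms(4) by fastforce
qed

theorem mainTheorem1:
  fixes h :: "real \<Rightarrow> real" and \<alpha> :: real
    and \<phi> F :: "real \<Rightarrow> real \<Rightarrow> real \<Rightarrow> real"
  assumes "smooth1 h" and "smooth3 \<phi>" and "smooth3 F"
    and "\<And>t x y. cos \<alpha> * pd_t \<phi> t x y + cos \<alpha> * pd_x \<phi> t x y + sin \<alpha> * pd_y \<phi> t x y
                   = sin \<alpha> * F t x y"
    and "\<And>t x y. sin \<alpha> * pd_t \<phi> t x y - sin \<alpha> * pd_x \<phi> t x y + cos \<alpha> * pd_y \<phi> t x y
                   = - cos \<alpha> * F t x y"
    and "\<And>t x y. F t x y + deriv h (\<phi> t x y) = 0"
  shows "EL_system h \<phi> (\<lambda>t x y. 0) (\<lambda>t x y. 0) F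
    \<and> (\<forall>t x y. wave_box \<phi> t x y + deriv (deriv h) (\<phi> t x y) * deriv h (\<phi> t x y) = 0)"
proof -
  define cc where "cc = cos \<alpha>"
  define ss where "ss = sin \<alpha>"
  have cs: "ss * ss + cc * cc = 1" unfolding ss_def cc_def by (simp add: power2_eq_square[symmetric])
  have sh: "smooth1 (deriv h)" using assms(1) by (auto elim: smooth1.cases)
  have dh: "(deriv h has_real_derivative deriv (deriv h) z) (at z)" for z
    using sh by (auto elim: smooth1.cases simp: DERIV_deriv_iff_real_differentiable)
  have E1: "cc * pd_t \<phi> t x y + cc * pd_x \<phi> t x y + ss * pd_y \<phi> t x y = ss * F t x y" for t x y
    using assms(4) unfolding cc_def ss_def .
  have E2: "ss * pd_t \<phi> t x y + (-ss) * pd_x \<phi> t x y + cc * pd_y \<phi> t x y = (-cc) * F t x y" for t x y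
    using assms(5)[of t x y] unfolding cc_def ss_def by simp
  have Fh: "F t x y = - deriv h (\<phi> t x y)" for t x y using assms(6)[of t x y] by simp
  have sT: "smooth3 (pd_t \<phi>)" and sX: "smooth3 (pd_x \<phi>)" and sY: "smooth3 (pd_y \<phi>)"
    using smooth3_D[OF assms(2)] by auto
  have wave: "wave_box \<phi> t x y + deriv (deriv h) (\<phi> t x y) * deriv h (\<phi> t x y) = 0" for t x y
  proof -
    define k where "k = deriv (deriv h) (\<phi> t x y)"
    have e1t: "cc * pd_t (pd_t \<phi>) t x y + cc * pd_t (pd_x \<phi>) t x y + ss * pd_t (pd_y \<phi>) t x y = ss * pd_t F t x y"
      by (rule lin_deriv[OF E1 pdt_has[OF sT] pdt_has[OF sX] pdt_has[OF sY] pdt_has[OF assms(3)]])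
    have e1x: "cc * pd_x (pd_t \<phi>) t x y + cc * pd_x (pd_x \<phi>) t x y + ss * pd_x (pd_y \<phi>) t x y = ss * pd_x F t x y"
      by (rule lin_deriv[OF E1 pdx_has[OF sT] pdx_has[OF sX] pdx_has[OF sY] pdx_has[OF assms(3)]])
    have e1y: "cc * pd_y (pd_t \<phi>) t x y + cc * pd_y (pd_x \<phi>) t x y + ss * pd_y (pd_y \<phi>) t x y = ss * pd_y F t x y"
      by (rule lin_deriv[OF E1 pdy_has[OF sT] pdy_has[OF sX] pdy_has[OF sY] pdy_has[OF assms(3)]])
    have e2t: "ss * pd_t (pd_t \<phi>) t x y + (-ss) * pd_t (pd_x \<phi>) t x y + cc * pd_t (pd_y \<phi>) t x y = (-cc) * pd_t F t x y"
      by (rule lin_deriv[OF E2 pdt_has[OF sT] pdt_has[OF sX] pdt_has[OF sY] pdt_has[OF assms(3)]])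
    have e2x: "ss * pd_x (pd_t \<phi>) t x y + (-ss) * pd_x (pd_x \<phi>) t x y + cc * pd_x (pd_y \<phi>) t x y = (-cc) * pd_x F t x y"
      by (rule lin_deriv[OF E2 pdx_has[OF sT] pdx_has[OF sX] pdx_has[OF sY] pdx_has[OF assms(3)]])
    have e2y: "ss * pd_y (pd_t \<phi>) t x y + (-ss) * pd_y (pd_x \<phi>) t x y + cc * pd_y (pd_y \<phi>) t x y = (-cc) * pd_y F t x y"
      by (rule lin_deriv[OF E2 pdy_has[OF sT] pdy_has[OF sX] pdy_has[OF sY] pdy_has[OF assms(3)]])
    have Ft: "pd_t F t x y = - k * pd_t \<phi> t x y" unfolding k_def
      by (rule chain_F[OF Fh dh pdt_has[OF assms(2)] pdt_has[OF assms(3)]])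
    have Fx: "pd_x F t x y = - k * pd_x \<phi> t x y" unfolding k_def
      by (rule chain_F[OF Fh dh pdx_has[OF assms(2)] pdx_has[OF assms(3)]])
    have Fy: "pd_y F t x y = - k * pd_y \<phi> t x y" unfolding k_def
      by (rule chain_F[OF Fh dh pdy_has[OF assms(2)] pdy_has[OF assms(3)]])
    have S1: "pd_x (pd_t \<phi>) t x y = pd_t (pd_x \<phi>) t x y" by (rule sym_tx[OF assms(2)])
    have S2: "pd_y (pd_t \<phi>) t x y = pd_t (pd_y \<phi>) t x y" by (rule sym_ty[OF assms(2)])
    have S3: "pd_y (pd_x \<phi>) t x y = pd_x (pd_y \<phi>) t x y" by (rule sym_xy[OF assms(2)])
    define G where "G = wave_box \<phi> t x y"
    have G: "G = pd_t (pd_t \<phi>) t x y - pd_x (pd_x \<phi>) t x y - pd_y (pd_y \<phi>) t x y"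
      unfolding G_def wave_box_def ..
    have "ss * G = (-cc) * pd_t F t x y + (-cc) * pd_x F t x y - ss * pd_y F t x y"
      using e2t e2x e1y S1 S2 S3 unfolding G by (simp add: algebra_simps)
    also have "\<dots> = k * (cc * pd_t \<phi> t x y + cc * pd_x \<phi> t x y + ss * pd_y \<phi> t x y)"
      unfolding Ft Fx Fy by (simp add: algebra_simps)
    also have "\<dots> = k * (ss * F t x y)" using E1 by simp
    finally have A: "ss * G = ss * (k * F t x y)" by simp
    have "cc * G = ss * pd_t F t x y - ss * pd_x F t x y + cc * pd_y F t x y"
      using e1t e1x e2y S1 S2 S3 unfolding G by (simp add: algebra_simps)
    also have "\<dots> = - k * (ss * pd_t \<phi> t x y + (-ss) * pd_x \<phi> t x y + cc * pd_y \<phi> t x y)"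
      unfolding Ft Fx Fy by (simp add: algebra_simps)
    also have "\<dots> = - k * ((-cc) * F t x y)" using E2 by simp
    finally have B: "cc * G = cc * (k * F t x y)" by simp
    have "G = (ss * ss + cc * cc) * G" using cs by simp
    also have "\<dots> = ss * (ss * G) + cc * (cc * G)" by (simp add: algebra_simps)
    also have "\<dots> = (ss * ss + cc * cc) * (k * F t x y)" unfolding A B by (simp add: algebra_simps)
    finally have "G = k * F t x y" using cs by simp
    thus ?thesis unfolding G_def k_def Fh by simp
  qed
  show ?thesis
    unfolding EL_system_def Dop1_def Dop2_def pd_t_def pd_x_def pd_y_def
    using wave assms(6) by simp
qed

end
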